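(* Let $\mathcal L$ be a non-trivial geometric lattice, let $(\mathcal E_1,\iota_1)$ and $(\mathcal E_2,\iota_2)$ be modular extensions of $\mathcal L$, and let $F$ be a flat of $\mathcal E_1$ with $F\ge F_{\iota_1}$. If $F$ is modular in $\mathcal E_1$, then $(F,\hat1_{\mathcal E_2})$ is a modular flat of the pushout $\mathcal E_1\cup_{\mathcal L}\mathcal E_2$.
   Context: A geometric lattice is a finite lattice (bottom $\hat0$, top $\hat1$, join $\vee$, meet $\wedge$) which is ranked (rank function $\mathrm{rk}$), atomic and semimodular ($\mathrm{rk}(F_1\wedge F_2)+\mathrm{rk}(F_1\vee F_2)\le\mathrm{rk}(F_1)+\mathrm{rk}(F_2)$); its elements are called flats, and it is non-trivial if it has at least two elements. A flat $F$ is modular if $\mathrm{rk}(F\wedge F')+\mathrm{rk}(F\vee F')=\mathrm{rk}(F)+\mathrm{rk}(F')$ for every flat $F'$. An embedding of geometric lattices is an injective order-preserving map preserving joins and sending atoms to atoms. A modular extension of $\mathcal L$ is a pair $(\mathcal E,\iota)$ with $\mathcal E$ a geometric lattice and $\iota:\mathcal L\to\mathcal E$ an embedding whose image is an interval $[\hat0,F_\iota]$ with $F_\iota$ modular in $\mathcal E$. The pushout $\mathcal E_1\cup_{\mathcal L}\mathcal E_2$ of two modular extensions is the subposet of $\mathcal E_1\times\mathcal E_2$ consisting of the pairs $(F_1,F_2)$ with $\iota_1^{-1}(F_1\wedge F_{\iota_1})=\iota_2^{-1}(F_2\wedge F_{\iota_2})$; it is a geometric lattice with rank $\mathrm{rk}(F_1,F_2)=\mathrm{rk}_{\mathcal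 E_1}(F_1)+\mathrm{rk}_{\mathcal E_2}(F_2)-\mathrm{rk}_{\mathcal L}(\iota_1^{-1}(F_1\wedge F_{\iota_1}))$. *)

theory Defs
  imports Main
begin

type_synonym 'a poset = "'a set \<times> ('a \<Rightarrow> 'a \<Rightarrow> bool)"

definition car :: "'a poset \<Rightarrow> 'a set" where "car P = fst P"
definition leq :: "'a poset \<Rightarrow> 'a \<Rightarrow> 'a \<Rightarrow> bool" where "leq P = snd P"

definition partial_order_on' :: "'a poset \<Rightarrow> bool" where
  "partial_order_on' P \<longleftrightarrow>
     (\<forall>x\<in>car P. leq P x x) \<and>
     (\<forall>x\<in>car P. \<forall>y\<in>car P. leq P x y \<and> leq P y x \<longrightarrow> x = y) \<and>
     (\<forall>x\<in>car P. \<forall>y\<in>car P. \<forall>z\<in>car P. leq P x y \<and> leq P y z \<longrightarrow> leq P x z)"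

definition is_lub :: "'a poset \<Rightarrow> 'a set \<Rightarrow> 'a \<Rightarrow> bool" where
  "is_lub P A c \<longleftrightarrow> c \<in> car P \<and> (\<forall>a\<in>A. leq P a c) \<and>
     (\<forall>d\<in>car P. (\<forall>a\<in>A. leq P a d) \<longrightarrow> leq P c d)"

definition is_glb :: "'a poset \<Rightarrow> 'a set \<Rightarrow> 'a \<Rightarrow> bool" where
  "is_glb P A c \<longleftrightarrow> c \<in> car P \<and> (\<forall>a\<in>A. leq P c a) \<and>
     (\<forall>d\<in>car P. (\<forall>a\<in>A. leq P d a) \<longrightarrow> leq P d c)"

definition join :: "'a poset \<Rightarrow> 'a \<Rightarrow> 'a \<Rightarrow> 'a" where
  "join P x y = (THE c. is_lub P {x, y} c)"

definition meet :: "'a poset \<Rightarrow> 'a \<Rightarrow> 'a \<Rightarrow> 'a" where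
  "meet P x y = (THE c. is_glb P {x, y} c)"

definition finite_lattice :: "'a poset \<Rightarrow> bool" where
  "finite_lattice P \<longleftrightarrow> finite (car P) \<and> car P \<noteq> {} \<and> partial_order_on' P \<and>
     (\<forall>x\<in>car P. \<forall>y\<in>car P. (\<exists>c. is_lub P {x, y} c) \<and> (\<exists>c. is_glb P {x, y} c))"

definition bot :: "'a poset \<Rightarrow> 'a" where
  "bot P = (THE b. b \<in> car P \<and> (\<forall>x\<in>car P. leq P b x))"

definition top :: "'a poset \<Rightarrow> 'a" where
  "top P = (THE t. t \<in> car P \<and> (\<forall>x\<in>car P. leq P x t))"

definition covers :: "'a poset \<Rightarrow> 'a \<Rightarrow> 'a \<Rightarrow> bool" where
  "covers P x y \<longleftrightarrow> x \<in> car P \<and> y \<in> car P \<and> leq P x y \<and> x \<noteq> y \<and>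
     \<not> (\<exists>z\<in>car P. leq P x z \<and> leq P z y \<and> z \<noteq> x \<and> z \<noteq> y)"

definition is_chain :: "'a poset \<Rightarrow> 'a set \<Rightarrow> bool" where
  "is_chain P C \<longleftrightarrow> C \<subseteq> car P \<and> (\<forall>a\<in>C. \<forall>b\<in>C. leq P a b \<or> leq P b a)"

definition rk :: "'a poset \<Rightarrow> 'a \<Rightarrow> nat" where
  "rk P x = Max {card C | C. is_chain P C \<and> (\<forall>c\<in>C. leq P c x)} - 1"

definition ranked :: "'a poset \<Rightarrow> bool" where
  "ranked P \<longleftrightarrow> rk P (bot P) = 0 \<and>
     (\<forall>x y. covers P x y \<longrightarrow> rk P y = rk P x + 1)"

definition atoms :: "'a poset \<Rightarrow> 'a set" where
  "atoms P = {a. covers P (bot P) a}"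

definition atomic :: "'a poset \<Rightarrow> bool" where
  "atomic P \<longleftrightarrow> (\<forall>x\<in>car P. is_lub P {a \<in> atoms P. leq P a x} x)"

definition semimodular :: "'a poset \<Rightarrow> bool" where
  "semimodular P \<longleftrightarrow> (\<forall>x\<in>car P. \<forall>y\<in>car P.
     rk P (meet P x y) + rk P (join P x y) \<le> rk P x + rk P y)"

definition geometric_lattice :: "'a poset \<Rightarrow> bool" where
  "geometric_lattice P \<longleftrightarrow> finite_lattice P \<and> ranked P \<and> atomic P \<and> semimodular P"

definition nontrivial :: "'a poset \<Rightarrow> bool" where
  "nontrivial P \<longleftrightarrow> card (car P) \<ge> 2"

definition modular_flat :: "'a poset \<Rightarrow> 'a \<Rightarrow> bool" where
  "modular_flat P F \<longleftrightarrow> F \<in> car P \<and> (\<forall>G\<in>car P.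
     rk P (meet P F G) + rk P (join P F G) = rk P F + rk P G)"

definition embedding :: "'l poset \<Rightarrow> 'a poset \<Rightarrow> ('l \<Rightarrow> 'a) \<Rightarrow> bool" where
  "embedding L E \<iota> \<longleftrightarrow> \<iota> ` car L \<subseteq> car E \<and> inj_on \<iota> (car L) \<and>
     (\<forall>x\<in>car L. \<forall>y\<in>car L. leq L x y \<longrightarrow> leq E (\<iota> x) (\<iota> y)) \<and>
     (\<forall>x\<in>car L. \<forall>y\<in>car L. \<iota> (join L x y) = join E (\<iota> x) (\<iota> y)) \<and>
     \<iota> ` atoms L \<subseteq> atoms E"

definition Fi :: "'l poset \<Rightarrow> ('l \<Rightarrow> 'a) \<Rightarrow> 'a" where
  "Fi L \<iota> = \<iota> (top L)"

definition modular_extension :: "'l poset \<Rightarrow> 'a poset \<Rightarrow> ('l \<Rightarrow> 'a) \<Rightarrow> bool" where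
  "modular_extension L E \<iota> \<longleftrightarrow> geometric_lattice E \<and> embedding L E \<iota> \<and>
     (\<exists>F\<in>car E. \<iota> ` car L = {G \<in> car E. leq E (bot E) G \<and> leq E G F} \<and> modular_flat E F)"

definition pushout :: "'l poset \<Rightarrow> 'a poset \<Rightarrow> ('l \<Rightarrow> 'a) \<Rightarrow> 'b poset \<Rightarrow> ('l \<Rightarrow> 'b)
    \<Rightarrow> ('a \<times> 'b) poset" where
  "pushout L E1 \<iota>1 E2 \<iota>2 =
    ({(F1, F2). F1 \<in> car E1 \<and> F2 \<in> car E2 \<and>
        inv_into (car L) \<iota>1 (meet E1 F1 (Fi L \<iota>1)) = inv_into (car L) \<iota>2 (meet E2 F2 (Fi L \<iota>2))},
     (\<lambda>(F1, F2) (G1, G2). leq E1 F1 G1 \<and> leq E2 F2 G2))"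

end

theory Submission imports Defs begin

lemma fl_fin: "finite_lattice P \<Longrightarrow> finite (car P)"
  by (simp add: finite_lattice_def)
lemma fl_refl: "finite_lattice P \<Longrightarrow> x \<in> car P \<Longrightarrow> leq P x x"
  unfolding finite_lattice_def partial_order_on'_def by blast
lemma fl_antisym: "finite_lattice P \<Longrightarrow> x \<in> car P \<Longrightarrow> y \<in> car P \<Longrightarrow> leq P x y \<Longrightarrow> leq P y x \<Longrightarrow> x = y"
  unfolding finite_lattice_def partial_order_on'_def by blast
lemma fl_trans: "finite_lattice P \<Longrightarrow> x \<in> car P \<Longrightarrow> y \<in> car P \<Longrightarrow> z \<in> car P \<Longrightarrow> leq P x y \<Longrightarrow> leq P y z \<Longrightarrow> leq P x z"
  unfolding finite_lattice_def partial_order_on'_def by blast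

definition antisym' :: "'a poset \<Rightarrow> bool" where
  "antisym' P \<longleftrightarrow> (\<forall>x\<in>car P. \<forall>y\<in>car P. leq P x y \<and> leq P y x \<longrightarrow> x = y)"

lemma fl_antisym': "finite_lattice P \<Longrightarrow> antisym' P"
  unfolding antisym'_def finite_lattice_def partial_order_on'_def by blast

lemma meet_eqI: assumes "antisym' P" "is_glb P {x,y} c" shows "meet P x y = c"
  unfolding meet_def
proof (rule the_equality)
  fix c' assume "is_glb P {x,y} c'"
  with assms show "c' = c" unfolding is_glb_def antisym'_def by metis
qed (fact assms(2))

lemma join_eqI: assumes "antisym' P" "is_lub P {x,y} c" shows "join P x y = c"
  unfolding join_def
proof (rule the_equality)
  fix c' assume "is_lub P {x,y} c'"
  with assms show "c' = c" unfolding is_lub_def antisym'_def by metis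
qed (fact assms(2))

lemma meet_glb: assumes "finite_lattice P" "x \<in> car P" "y \<in> car P"
  shows "is_glb P {x,y} (meet P x y)"
proof -
  obtain c where "is_glb P {x,y} c" using assms unfolding finite_lattice_def by blast
  then show ?thesis using meet_eqI[OF fl_antisym'[OF assms(1)]] by simp
qed

lemma join_lub: assumes "finite_lattice P" "x \<in> car P" "y \<in> car P"
  shows "is_lub P {x,y} (join P x y)"
proof -
  obtain c where "is_lub P {x,y} c" using assms unfolding finite_lattice_def by blast
  then show ?thesis using join_eqI[OF fl_antisym'[OF assms(1)]] by simp
qed

lemma meet_props: assumes "finite_lattice P" "x \<in> car P" "y \<in> car P"
  shows "meet P x y \<in> car P" "leq P (meet P x y) x" "leq P (meet P x y) y"
    "\<And>d. d \<in> car P \<Longrightarrow> leq P d x \<Longrightarrow> leq P d y \<Longrightarrow> leq P d (meet P x y)"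
  using meet_glb[OF assms] unfolding is_glb_def by auto

lemma join_props: assumes "finite_lattice P" "x \<in> car P" "y \<in> car P"
  shows "join P x y \<in> car P" "leq P x (join P x y)" "leq P y (join P x y)"
    "\<And>d. d \<in> car P \<Longrightarrow> leq P x d \<Longrightarrow> leq P y d \<Longrightarrow> leq P (join P x y) d"
  using join_lub[OF assms] unfolding is_lub_def by auto

lemma meet_comm: "meet P x y = meet P y x"
  unfolding meet_def by (simp add: insert_commute)

lemma meet_absorb: assumes "finite_lattice P" "x \<in> car P" "y \<in> car P" "leq P x y"
  shows "meet P x y = x"
  using assms by (intro meet_eqI fl_antisym') (auto simp: is_glb_def fl_refl)

lemma chains_fin: "finite (car P) \<Longrightarrow> finite {card C | C. is_chain P C \<and> (\<forall>c\<in>C. leq P c x)}"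
  by (rule finite_subset[of _ "card ` Pow (car P)"]) (auto simp: is_chain_def)

lemma rk_eqI: assumes "finite (car P)"
  and "\<And>C. is_chain P C \<Longrightarrow> (\<forall>c\<in>C. leq P c x) \<Longrightarrow> card C \<le> n+1"
  and "is_chain P C0" "\<forall>c\<in>C0. leq P c x" "card C0 = n+1"
  shows "rk P x = n"
proof -
  have "Max {card C | C. is_chain P C \<and> (\<forall>c\<in>C. leq P c x)} = n+1"
  proof (rule Max_eqI[OF chains_fin[OF assms(1)]])
    fix y assume "y \<in> {card C | C. is_chain P C \<and> (\<forall>c\<in>C. leq P c x)}"
    then show "y \<le> n+1" using assms(2) by blast
  next
    show "n+1 \<in> {card C | C. is_chain P C \<and> (\<forall>c\<in>C. leq P c x)}"
    proof -
      have "card C0 \<in> {card C | C. is_chain P C \<and> (\<forall>c\<in>C. leq P c x)}" using assms(3,4) by blast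
      then show ?thesis using assms(5) by simp
    qed
  qed
  then show ?thesis unfolding rk_def by simp
qed

lemma rk_less: assumes fl: "finite_lattice P" and xy: "x \<in> car P" "y \<in> car P" "leq P x y" "x \<noteq> y"
  shows "rk P x < rk P y"
proof -
  let ?S = "\<lambda>x. {card C | C. is_chain P C \<and> (\<forall>c\<in>C. leq P c x)}"
  have fin: "\<And>x. finite (?S x)" by (rule chains_fin[OF fl_fin[OF fl]])
  have "is_chain P {x}" using xy fl_refl[OF fl] by (auto simp: is_chain_def)
  then have "card {x} \<in> ?S x" using fl_refl[OF fl xy(1)] by blast
  then have ge1: "1 \<le> Max (?S x)" using Max_ge[OF fin] by fastforce
  have "Max (?S x) \<in> ?S x" using Max_in[OF fin] \<open>card {x} \<in> ?S x\<close> by blast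
  then obtain C where C: "is_chain P C" "\<forall>c\<in>C. leq P c x" "card C = Max (?S x)" by auto
  have Ccar: "C \<subseteq> car P" using C(1) by (simp add: is_chain_def)
  have finC: "finite C" using Ccar fl_fin[OF fl] finite_subset by blast
  have yC: "y \<notin> C" using C(2) xy fl_antisym[OF fl] Ccar by blast
  have below: "\<forall>c\<in>insert y C. leq P c y"
    using C(2) xy Ccar fl_trans[OF fl] fl_refl[OF fl] by blast
  have "is_chain P (insert y C)"
    using C(1) xy below unfolding is_chain_def by auto
  then have "card (insert y C) \<in> ?S y" using below by blast
  then have "card (insert y C) \<le> Max (?S y)" using Max_ge[OF fin] by blast
  then have "Max (?S x) + 1 \<le> Max (?S y)" using finC yC C(3) by simp
  then show ?thesis using ge1 unfolding rk_def by simp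
qed

lemma rk_mono: "finite_lattice P \<Longrightarrow> x \<in> car P \<Longrightarrow> y \<in> car P \<Longrightarrow> leq P x y \<Longrightarrow> rk P x \<le> rk P y"
  using rk_less[of P x y] by fastforce

lemma bot_ex: assumes fl: "finite_lattice P" shows "\<exists>b\<in>car P. \<forall>x\<in>car P. leq P b x"
proof -
  have fin: "finite (rk P ` car P)" "rk P ` car P \<noteq> {}" using fl_fin[OF fl] fl unfolding finite_lattice_def by auto
  obtain b where b: "b \<in> car P" "rk P b = Min (rk P ` car P)" using Min_in[OF fin] by auto
  show ?thesis
  proof (intro bexI[OF _ b(1)] ballI)
    fix x assume x: "x \<in> car P"
    note m = meet_props[OF fl b(1) x]
    have "meet P b x = b"
    proof (rule ccontr)
      assume "meet P b x \<noteq> b"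
      then have "rk P (meet P b x) < rk P b" using rk_less[OF fl m(1) b(1) m(2)] by blast
      moreover have "rk P b \<le> rk P (meet P b x)" using b(2) Min_le[OF fin(1)] m(1) by simp
      ultimately show False by simp
    qed
    then show "leq P b x" using m(3) by simp
  qed
qed

lemma top_ex: assumes fl: "finite_lattice P" shows "\<exists>b\<in>car P. \<forall>x\<in>car P. leq P x b"
proof -
  have fin: "finite (rk P ` car P)" "rk P ` car P \<noteq> {}" using fl_fin[OF fl] fl unfolding finite_lattice_def by auto
  obtain b where b: "b \<in> car P" "rk P b = Max (rk P ` car P)" using Max_in[OF fin] by auto
  show ?thesis
  proof (intro bexI[OF _ b(1)] ballI)
    fix x assume x: "x \<in> car P"
    note m = join_props[OF fl b(1) x]
    have "join P b x = b"
    proof (rule ccontr)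
      assume "join P b x \<noteq> b"
      then have "rk P b < rk P (join P b x)" using rk_less[OF fl b(1) m(1) m(2)] by metis
      moreover have "rk P (join P b x) \<le> rk P b" using b(2) Max_ge[OF fin(1)] m(1) by simp
      ultimately show False by simp
    qed
    then show "leq P x b" using m(3) by simp
  qed
qed

lemma bot_props: assumes fl: "finite_lattice P"
  shows "bot P \<in> car P" "\<And>x. x \<in> car P \<Longrightarrow> leq P (bot P) x"
proof -
  obtain b where b: "b\<in>car P" "\<forall>x\<in>car P. leq P b x" using bot_ex[OF fl] by blast
  have "bot P = b" unfolding bot_def
    by (rule the_equality) (use b fl_antisym[OF fl] in blast)+
  then show "bot P \<in> car P" "\<And>x. x \<in> car P \<Longrightarrow> leq P (bot P) x" using b by auto
qed

lemma top_props: assumes fl: "finite_lattice P"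
  shows "top P \<in> car P" "\<And>x. x \<in> car P \<Longrightarrow> leq P x (top P)"
proof -
  obtain b where b: "b\<in>car P" "\<forall>x\<in>car P. leq P x b" using top_ex[OF fl] by blast
  have "top P = b" unfolding top_def
    by (rule the_equality) (use b fl_antisym[OF fl] in blast)+
  then show "top P \<in> car P" "\<And>x. x \<in> car P \<Longrightarrow> leq P x (top P)" using b by auto
qed

lemma chain_up_aux:
  assumes fl: "finite_lattice P" and rkd: "ranked P"
  shows "\<forall>a. rk P b - rk P a = n \<longrightarrow> a \<in> car P \<longrightarrow> b \<in> car P \<longrightarrow> leq P a b \<longrightarrow>
     (\<exists>C. is_chain P C \<and> (\<forall>c\<in>C. leq P a c \<and> c \<noteq> a \<and> leq P c b) \<and> card C = rk P b - rk P a)"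
proof (induction n rule: less_induct)
  case (less n)
  show ?case
  proof (intro allI impI)
    fix a assume n: "rk P b - rk P a = n" and a: "a \<in> car P" and b: "b \<in> car P" and ab: "leq P a b"
    show "\<exists>C. is_chain P C \<and> (\<forall>c\<in>C. leq P a c \<and> c \<noteq> a \<and> leq P c b) \<and> card C = rk P b - rk P a"
    proof (cases "a = b")
      case True then show ?thesis by (intro exI[of _ "{}"]) (auto simp: is_chain_def)
    next
      case False
      define S where "S = {z \<in> car P. leq P a z \<and> leq P z b \<and> z \<noteq> a}"
      have bS: "b \<in> S" using False b ab fl_refl[OF fl] by (auto simp: S_def)
      have "\<exists>x. x \<in> S \<and> (\<forall>y. y \<in> S \<longrightarrow> rk P x \<le> rk P y)" using ex_has_least_nat[of "\<lambda>z. z \<in> S" b "rk P"] bS by simp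
      then obtain c where c: "c \<in> S" and cmin': "\<forall>y. y \<in> S \<longrightarrow> rk P c \<le> rk P y" by blast
      have cmin: "\<And>z. z \<in> S \<Longrightarrow> rk P c \<le> rk P z" using cmin' by blast
      have cc: "c \<in> car P" "leq P a c" "leq P c b" "c \<noteq> a" using c(1) by (auto simp: S_def)
      have nz: "\<not> (\<exists>z\<in>car P. leq P a z \<and> leq P z c \<and> z \<noteq> a \<and> z \<noteq> c)"
      proof
        assume "\<exists>z\<in>car P. leq P a z \<and> leq P z c \<and> z \<noteq> a \<and> z \<noteq> c"
        then obtain z where z: "z \<in> car P" "leq P a z" "leq P z c" "z \<noteq> a" "z \<noteq> c" by blast
        have "leq P z b" using fl_trans[OF fl z(1) cc(1) b z(3) cc(3)] .
        then have "z \<in> S" using z by (simp add: S_def)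
        then have "rk P c \<le> rk P z" by (rule cmin)
        moreover have "rk P z < rk P c" using rk_less[OF fl z(1) cc(1) z(3) z(5)] .
        ultimately show False by simp
      qed
      have "covers P a c" unfolding covers_def using a cc nz by blast
      then have rc: "rk P c = rk P a + 1" using rkd by (simp add: ranked_def)
      have "rk P c \<le> rk P b" using rk_mono[OF fl cc(1) b cc(3)] .
      then have lt: "rk P b - rk P c < n" using n rc by simp
      obtain C' where C': "is_chain P C'" "\<forall>z\<in>C'. leq P c z \<and> z \<noteq> c \<and> leq P z b"
        "card C' = rk P b - rk P c"
        using less.IH[OF lt] cc b by blast
      have C'car: "C' \<subseteq> car P" using C'(1) by (simp add: is_chain_def)
      have finC': "finite C'" using C'car fl_fin[OF fl] finite_subset by blast
      have cnot: "c \<notin> C'" using C'(2) by blast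
      show ?thesis
      proof (intro exI[of _ "insert c C'"] conjI)
        show "is_chain P (insert c C')"
          using C'(1) C'(2) cc fl_refl[OF fl] unfolding is_chain_def by auto
        show "\<forall>z\<in>insert c C'. leq P a z \<and> z \<noteq> a \<and> leq P z b"
        proof
          fix z assume "z \<in> insert c C'"
          then show "leq P a z \<and> z \<noteq> a \<and> leq P z b"
          proof
            assume "z = c" then show ?thesis using cc by simp
          next
            assume zC: "z \<in> C'"
            then have z: "z \<in> car P" "leq P c z" "leq P z b" using C'(2) C'car by auto
            have az: "leq P a z" using fl_trans[OF fl a cc(1) z(1) cc(2) z(2)] .
            have "z \<noteq> a" using fl_antisym[OF fl cc(1) a _ cc(2)] z(2) cc(4) by blast
            then show ?thesis using az z by simp
          qed
        qed
        show "card (insert c C') = rk P b - rk P a"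
          using finC' cnot C'(3) rc \<open>rk P c \<le> rk P b\<close> by simp
      qed
    qed
  qed
qed

lemma chain_up:
  assumes "finite_lattice P" "ranked P" "a \<in> car P" "b \<in> car P" "leq P a b"
  shows "\<exists>C. is_chain P C \<and> (\<forall>c\<in>C. leq P a c \<and> c \<noteq> a \<and> leq P c b) \<and> card C = rk P b - rk P a"
  using chain_up_aux[OF assms(1,2)] assms(3-) by blast


lemma sandwich: assumes fl: "finite_lattice P" and c: "m \<in> car P" "y \<in> car P" "z \<in> car P" "w \<in> car P"
  and le: "leq P m y" "leq P y z" and mz: "meet P z w = m"
  shows "meet P y w = m"
proof -
  note my = meet_props[OF fl c(2) c(4)]
  note mzw = meet_props[OF fl c(3) c(4)]
  have "leq P (meet P y w) (meet P z w)"
    using mzw(4)[OF my(1)] fl_trans[OF fl my(1) c(2) c(3) my(2) le(2)] my(3) by blast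
  then have 1: "leq P (meet P y w) m" using mz by simp
  have "leq P m w" using mzw(3) mz by simp
  then have 2: "leq P m (meet P y w)" using my(4)[OF c(1) le(1)] by blast
  show ?thesis using fl_antisym[OF fl my(1) c(1) 1 2] .
qed

lemma chain_union: "is_chain P X \<Longrightarrow> is_chain P Y \<Longrightarrow> (\<forall>p\<in>X. \<forall>q\<in>Y. leq P p q) \<Longrightarrow> is_chain P (X \<union> Y)"
  unfolding is_chain_def by blast

lemma me_facts:
  assumes fL: "finite_lattice L" and me: "modular_extension L E \<iota>"
  shows "finite_lattice E" "ranked E" "Fi L \<iota> \<in> car E" "modular_flat E (Fi L \<iota>)"
    "\<iota> ` car L = {G \<in> car E. leq E G (Fi L \<iota>)}" "inj_on \<iota> (car L)"
    "\<And>x y. x\<in>car L \<Longrightarrow> y\<in>car L \<Longrightarrow> leq L x y \<Longrightarrow> leq E (\<iota> x) (\<iota> y)"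
    "\<And>x y. x\<in>car L \<Longrightarrow> y\<in>car L \<Longrightarrow> leq E (\<iota> x) (\<iota> y) \<Longrightarrow> leq L x y"
    "top L \<in> car L" "\<iota> (top L) = Fi L \<iota>"
proof -
  have gE: "geometric_lattice E" and emb: "embedding L E \<iota>" using me unfolding modular_extension_def by blast+
  obtain F0 where F0: "F0 \<in> car E" "\<iota> ` car L = {G \<in> car E. leq E (bot E) G \<and> leq E G F0}" "modular_flat E F0"
    using me unfolding modular_extension_def by blast
  show fE: "finite_lattice E" and "ranked E" using gE unfolding geometric_lattice_def by blast+
  have img: "\<iota> ` car L = {G \<in> car E. leq E G F0}" using F0(2) bot_props[OF fE] by auto
  show tL: "top L \<in> car L" using top_props[OF fL] by blast
  have sub: "\<iota> ` car L \<subseteq> car E" and inj: "inj_on \<iota> (car L)"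
    and mono: "\<And>x y. x\<in>car L \<Longrightarrow> y\<in>car L \<Longrightarrow> leq L x y \<Longrightarrow> leq E (\<iota> x) (\<iota> y)"
    and jn: "\<And>x y. x\<in>car L \<Longrightarrow> y\<in>car L \<Longrightarrow> \<iota> (join L x y) = join E (\<iota> x) (\<iota> y)"
    using emb unfolding embedding_def by blast+
  show "inj_on \<iota> (car L)" by (fact inj)
  show "\<And>x y. x\<in>car L \<Longrightarrow> y\<in>car L \<Longrightarrow> leq L x y \<Longrightarrow> leq E (\<iota> x) (\<iota> y)" by (fact mono)
  have "F0 \<in> \<iota> ` car L" using img F0(1) fl_refl[OF fE F0(1)] by blast
  then obtain x0 where x0: "x0 \<in> car L" "F0 = \<iota> x0" by blast
  have "leq E F0 (\<iota> (top L))" using mono[OF x0(1) tL] top_props(2)[OF fL x0(1)] x0(2) by simp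
  moreover have "\<iota> (top L) \<in> \<iota> ` car L" using tL by blast
  then have "leq E (\<iota> (top L)) F0" "\<iota> (top L) \<in> car E" using img by auto
  ultimately have eq: "Fi L \<iota> = F0" unfolding Fi_def using fl_antisym[OF fE _ F0(1)] by blast
  show "\<iota> (top L) = Fi L \<iota>" by (simp add: Fi_def)
  show "Fi L \<iota> \<in> car E" "modular_flat E (Fi L \<iota>)" "\<iota> ` car L = {G \<in> car E. leq E G (Fi L \<iota>)}"
    using eq F0 img by auto
  show "\<And>x y. x\<in>car L \<Longrightarrow> y\<in>car L \<Longrightarrow> leq E (\<iota> x) (\<iota> y) \<Longrightarrow> leq L x y"
  proof -
    fix x y assume xy: "x\<in>car L" "y\<in>car L" "leq E (\<iota> x) (\<iota> y)"
    have ix: "\<iota> x \<in> car E" "\<iota> y \<in> car E" using sub xy by auto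
    have "is_lub E {\<iota> x, \<iota> y} (\<iota> y)"
      unfolding is_lub_def using ix xy(3) fl_refl[OF fE] by auto
    then have "join E (\<iota> x) (\<iota> y) = \<iota> y" by (rule join_eqI[OF fl_antisym'[OF fE]])
    then have "\<iota> (join L x y) = \<iota> y" using jn[OF xy(1,2)] by simp
    then have "join L x y = y" using inj join_props(1)[OF fL xy(1,2)] xy(2) by (meson inj_onD)
    then show "leq L x y" using join_props(2)[OF fL xy(1,2)] by simp
  qed
qed


theorem lemma4:
  fixes L :: "'l poset" and E1 :: "'a poset" and E2 :: "'b poset"
    and \<iota>1 :: "'l \<Rightarrow> 'a" and \<iota>2 :: "'l \<Rightarrow> 'b" and F :: 'a
  assumes "geometric_lattice L" and "nontrivial L"
    and "modular_extension L E1 \<iota>1" and "modular_extension L E2 \<iota>2"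
    and "F \<in> car E1" and "leq E1 (Fi L \<iota>1) F"
    and "modular_flat E1 F"
  shows "modular_flat (pushout L E1 \<iota>1 E2 \<iota>2) (F, top E2)"
proof -
  have fL: "finite_lattice L" using assms(1) unfolding geometric_lattice_def by blast
  note m1 = me_facts[OF fL assms(3)]
  note m2 = me_facts[OF fL assms(4)]
  have f1: "finite_lattice E1" and f2: "finite_lattice E2" using m1(1) m2(1) .
  define P where "P = pushout L E1 \<iota>1 E2 \<iota>2"
  define F1 where "F1 = Fi L \<iota>1"
  define F2 where "F2 = Fi L \<iota>2"
  define t2 where "t2 = top E2"
  define inv1 where "inv1 = inv_into (car L) \<iota>1"
  define inv2 where "inv2 = inv_into (car L) \<iota>2"
  have F1c: "F1 \<in> car E1" and F2c: "F2 \<in> car E2" using m1(3) m2(3) by (simp_all add: F1_def F2_def)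
  have img1: "\<iota>1 ` car L = {G \<in> car E1. leq E1 G F1}" using m1(5) by (simp add: F1_def)
  have img2: "\<iota>2 ` car L = {G \<in> car E2. leq E2 G F2}" using m2(5) by (simp add: F2_def)
  have carP: "\<And>A B. (A,B) \<in> car P \<longleftrightarrow> A \<in> car E1 \<and> B \<in> car E2 \<and>
      inv1 (meet E1 A F1) = inv2 (meet E2 B F2)"
    by (simp add: P_def pushout_def car_def F1_def F2_def inv1_def inv2_def)
  have leqP: "\<And>A B A' B'. leq P (A,B) (A',B') \<longleftrightarrow> leq E1 A A' \<and> leq E2 B B'"
    by (simp add: P_def pushout_def leq_def)
  have finP: "finite (car P)"
  proof (rule finite_subset[of _ "car E1 \<times> car E2"])
    show "car P \<subseteq> car E1 \<times> car E2" using carP by auto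
    show "finite (car E1 \<times> car E2)" using fl_fin[OF f1] fl_fin[OF f2] by simp
  qed
  have antiP: "antisym' P"
    unfolding antisym'_def
  proof (intro ballI impI)
    fix p q assume pq: "p \<in> car P" "q \<in> car P" "leq P p q \<and> leq P q p"
    obtain A B where p: "p = (A,B)" by (cases p)
    obtain A' B' where q: "q = (A',B')" by (cases q)
    show "p = q" using pq fl_antisym[OF f1, of A A'] fl_antisym[OF f2, of B B'] unfolding p q carP leqP by simp
  qed
  have K: "\<And>A B. (A,B) \<in> car P \<Longrightarrow> inv1 (meet E1 A F1) \<in> car L \<and>
      \<iota>1 (inv1 (meet E1 A F1)) = meet E1 A F1 \<and> \<iota>2 (inv1 (meet E1 A F1)) = meet E2 B F2"
  proof -
    fix A B assume x: "(A,B) \<in> car P"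
    then have A: "A \<in> car E1" and B: "B \<in> car E2" and eq: "inv1 (meet E1 A F1) = inv2 (meet E2 B F2)"
      using carP by blast+
    have "meet E1 A F1 \<in> \<iota>1 ` car L" using img1 meet_props[OF f1 A F1c] by blast
    then have 1: "inv1 (meet E1 A F1) \<in> car L" "\<iota>1 (inv1 (meet E1 A F1)) = meet E1 A F1"
      unfolding inv1_def by (auto intro: inv_into_into f_inv_into_f)
    have "meet E2 B F2 \<in> \<iota>2 ` car L" using img2 meet_props[OF f2 B F2c] by blast
    then have "\<iota>2 (inv2 (meet E2 B F2)) = meet E2 B F2"
      unfolding inv2_def by (auto intro: f_inv_into_f)
    then show "inv1 (meet E1 A F1) \<in> car L \<and>
      \<iota>1 (inv1 (meet E1 A F1)) = meet E1 A F1 \<and> \<iota>2 (inv1 (meet E1 A F1)) = meet E2 B F2"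
      using 1 eq by simp
  qed
  have memP: "\<And>A B l. A \<in> car E1 \<Longrightarrow> B \<in> car E2 \<Longrightarrow> l \<in> car L \<Longrightarrow> meet E1 A F1 = \<iota>1 l
      \<Longrightarrow> meet E2 B F2 = \<iota>2 l \<Longrightarrow> (A,B) \<in> car P"
  proof -
    fix A B l assume h: "A \<in> car E1" "B \<in> car E2" "l \<in> car L" "meet E1 A F1 = \<iota>1 l" "meet E2 B F2 = \<iota>2 l"
    have "inv1 (\<iota>1 l) = l" unfolding inv1_def using inv_into_f_f[OF m1(6) h(3)] .
    moreover have "inv2 (\<iota>2 l) = l" unfolding inv2_def using inv_into_f_f[OF m2(6) h(3)] .
    ultimately show "(A,B) \<in> car P" using carP h by simp
  qed
  define \<phi> where "\<phi> = (\<lambda>(A,B). rk E1 A - rk E1 (meet E1 A F1) + rk E2 B)"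
  have mpart: "\<And>A A'. A \<in> car E1 \<Longrightarrow> A' \<in> car E1 \<Longrightarrow> leq E1 A A' \<Longrightarrow>
      rk E1 A - rk E1 (meet E1 A F1) \<le> rk E1 A' - rk E1 (meet E1 A' F1)"
  proof -
    fix A A' assume h: "A \<in> car E1" "A' \<in> car E1" "leq E1 A A'"
    have mod: "\<And>G. G \<in> car E1 \<Longrightarrow> rk E1 (meet E1 G F1) + rk E1 (join E1 F1 G) = rk E1 F1 + rk E1 G"
      using m1(4) unfolding modular_flat_def F1_def by (metis meet_comm)
    note j = join_props[OF f1 F1c h(1)]
    note j' = join_props[OF f1 F1c h(2)]
    have "leq E1 A (join E1 F1 A')" using fl_trans[OF f1 h(1) h(2) j'(1) h(3) j'(3)] .
    then have "leq E1 (join E1 F1 A) (join E1 F1 A')" using j(4)[OF j'(1) j'(2)] by blast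
    then have "rk E1 (join E1 F1 A) \<le> rk E1 (join E1 F1 A')" using rk_mono[OF f1 j(1) j'(1)] by blast
    then show "rk E1 A - rk E1 (meet E1 A F1) \<le> rk E1 A' - rk E1 (meet E1 A' F1)"
      using mod[OF h(1)] mod[OF h(2)] by linarith
  qed
  have mle: "\<And>A. A \<in> car E1 \<Longrightarrow> rk E1 (meet E1 A F1) \<le> rk E1 A"
    using meet_props[OF f1 _ F1c] rk_mono[OF f1] by blast
  have strict: "\<And>p q. p \<in> car P \<Longrightarrow> q \<in> car P \<Longrightarrow> leq P p q \<Longrightarrow> p \<noteq> q \<Longrightarrow> \<phi> p < \<phi> q"
  proof -
    fix p q assume pq: "p \<in> car P" "q \<in> car P" "leq P p q" "p \<noteq> q"
    obtain A B where p: "p = (A,B)" by (cases p)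
    obtain A' B' where q: "q = (A',B')" by (cases q)
    have A: "A \<in> car E1" "B \<in> car E2" "A' \<in> car E1" "B' \<in> car E2" using pq carP unfolding p q by blast+
    have le: "leq E1 A A'" "leq E2 B B'" using pq(3) leqP unfolding p q by blast+
    have mp: "rk E1 A - rk E1 (meet E1 A F1) \<le> rk E1 A' - rk E1 (meet E1 A' F1)" using mpart A le by blast
    show "\<phi> p < \<phi> q"
    proof (cases "B = B'")
      case False
      then have "rk E2 B < rk E2 B'" using rk_less[OF f2 A(2) A(4) le(2)] by blast
      then show ?thesis using mp unfolding p q \<phi>_def by simp
    next
      case True
      have k1: "\<iota>2 (inv1 (meet E1 A F1)) = meet E2 B F2" "inv1 (meet E1 A F1) \<in> car L"
        "\<iota>1 (inv1 (meet E1 A F1)) = meet E1 A F1" using K pq(1) unfolding p by blast+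
      have k2: "\<iota>2 (inv1 (meet E1 A' F1)) = meet E2 B F2" "inv1 (meet E1 A' F1) \<in> car L"
        "\<iota>1 (inv1 (meet E1 A' F1)) = meet E1 A' F1" using K pq(2) True unfolding q by blast+
      have "inv1 (meet E1 A F1) = inv1 (meet E1 A' F1)" using inj_onD[OF m2(6)] k1 k2 by metis
      then have eqm: "meet E1 A F1 = meet E1 A' F1" using k1(3) k2(3) by metis
      have "A \<noteq> A'" using pq(4) True unfolding p q by blast
      then have "rk E1 A < rk E1 A'" using rk_less[OF f1 A(1) A(3) le(1)] by blast
      then show ?thesis using eqm True mle[OF A(1)] mle[OF A(3)] unfolding p q \<phi>_def by simp
    qed
  qed
  have mono: "\<And>p q. p \<in> car P \<Longrightarrow> q \<in> car P \<Longrightarrow> leq P p q \<Longrightarrow> \<phi> p \<le> \<phi> q"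
    using strict by fastforce
  have rkP: "\<And>A B. (A,B) \<in> car P \<Longrightarrow> rk P (A,B) = \<phi> (A,B)"
  proof -
    fix A B assume x: "(A,B) \<in> car P"
    have A: "A \<in> car E1" and B: "B \<in> car E2" using x carP by blast+
    define l where "l = inv1 (meet E1 A F1)"
    define a where "a = meet E1 A F1"
    define b where "b = meet E2 B F2"
    have l: "l \<in> car L" "\<iota>1 l = a" "\<iota>2 l = b" using K[OF x] unfolding l_def a_def b_def by blast+
    note ma = meet_props[OF f1 A F1c] and mb = meet_props[OF f2 B F2c]
    have ac: "a \<in> car E1" "leq E1 a A" "leq E1 a F1" using ma unfolding a_def by blast+
    have bc: "b \<in> car E2" "leq E2 b B" "leq E2 b F2" using mb unfolding b_def by blast+
    have phix: "\<phi> (A,B) = rk E1 A - rk E1 a + rk E2 B" unfolding \<phi>_def a_def by simp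
    have rb0: "rk E2 (bot E2) = 0" using m2(2) unfolding ranked_def by blast
    have bot2: "bot E2 \<in> car E2" "\<And>x. x \<in> car E2 \<Longrightarrow> leq E2 (bot E2) x" using bot_props[OF f2] by blast+
    obtain C1 where C1: "is_chain E2 C1" "\<forall>c\<in>C1. leq E2 (bot E2) c \<and> c \<noteq> bot E2 \<and> leq E2 c b"
        "card C1 = rk E2 b - rk E2 (bot E2)"
      using chain_up[OF f2 m2(2) bot2(1) bc(1) bot2(2)[OF bc(1)]] by blast
    obtain C2 where C2: "is_chain E2 C2" "\<forall>c\<in>C2. leq E2 b c \<and> c \<noteq> b \<and> leq E2 c B"
        "card C2 = rk E2 B - rk E2 b"
      using chain_up[OF f2 m2(2) bc(1) B bc(2)] by blast
    obtain C3 where C3: "is_chain E1 C3" "\<forall>c\<in>C3. leq E1 a c \<and> c \<noteq> a \<and> leq E1 c A"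
        "card C3 = rk E1 A - rk E1 a"
      using chain_up[OF f1 m1(2) ac(1) A ac(2)] by blast
    have C1c: "C1 \<subseteq> car E2" "C2 \<subseteq> car E2" "C3 \<subseteq> car E1"
      using C1(1) C2(1) C3(1) unfolding is_chain_def by blast+
    have finC: "finite C1" "finite C2" "finite C3"
      using C1c fl_fin[OF f1] fl_fin[OF f2] finite_subset by blast+
    define D1 where "D1 = insert (bot E2) C1"
    have D1c: "D1 \<subseteq> car E2" using C1c bot2 unfolding D1_def by blast
    have D1b: "\<forall>y\<in>D1. leq E2 y b" using C1(2) bot2(2)[OF bc(1)] unfolding D1_def by blast
    have D1ch: "\<forall>y\<in>D1. \<forall>y'\<in>D1. leq E2 y y' \<or> leq E2 y' y"
      using C1(1) C1(2) fl_refl[OF f2 bot2(1)] unfolding D1_def is_chain_def by blast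
    have cardD1: "card D1 = rk E2 b + 1"
    proof -
      have "bot E2 \<notin> C1" using C1(2) by blast
      then show ?thesis using finC(1) C1(3) rb0 unfolding D1_def by simp
    qed
    define f where "f = (\<lambda>y. (\<iota>1 (inv2 y), y))"
    have Y: "\<And>y. y \<in> car E2 \<Longrightarrow> leq E2 y b \<Longrightarrow> inv2 y \<in> car L \<and> \<iota>2 (inv2 y) = y \<and>
        \<iota>1 (inv2 y) \<in> car E1 \<and> leq E1 (\<iota>1 (inv2 y)) a \<and> f y \<in> car P"
    proof -
      fix y assume y: "y \<in> car E2" "leq E2 y b"
      have yF: "leq E2 y F2" using fl_trans[OF f2 y(1) bc(1) F2c y(2) bc(3)] .
      then have "y \<in> \<iota>2 ` car L" using img2 y(1) by blast
      then have m: "inv2 y \<in> car L" "\<iota>2 (inv2 y) = y" unfolding inv2_def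
        by (auto intro: inv_into_into f_inv_into_f)
      have "leq L (inv2 y) l" using m2(8)[OF m(1) l(1)] m(2) l(3) y(2) by simp
      then have le: "leq E1 (\<iota>1 (inv2 y)) a" using m1(7)[OF m(1) l(1)] l(2) by simp
      have "\<iota>1 (inv2 y) \<in> \<iota>1 ` car L" using m(1) by blast
      then have i: "\<iota>1 (inv2 y) \<in> car E1" "leq E1 (\<iota>1 (inv2 y)) F1" using img1 by blast+
      have "meet E1 (\<iota>1 (inv2 y)) F1 = \<iota>1 (inv2 y)" using meet_absorb[OF f1 i(1) F1c i(2)] .
      moreover have "meet E2 y F2 = \<iota>2 (inv2 y)" using meet_absorb[OF f2 y(1) F2c yF] m(2) by simp
      ultimately have "f y \<in> car P" unfolding f_def using memP[OF i(1) y(1) m(1)] by simp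
      then show "inv2 y \<in> car L \<and> \<iota>2 (inv2 y) = y \<and>
        \<iota>1 (inv2 y) \<in> car E1 \<and> leq E1 (\<iota>1 (inv2 y)) a \<and> f y \<in> car P" using m le i by blast
    qed
    have Z2: "\<And>y. y \<in> C2 \<Longrightarrow> (a, y) \<in> car P"
    proof -
      fix y assume y: "y \<in> C2"
      have yc: "y \<in> car E2" "leq E2 b y" "leq E2 y B" using C1c(2) C2(2) y by blast+
      have "meet E2 y F2 = b" using sandwich[OF f2 bc(1) yc(1) B F2c yc(2) yc(3) b_def[symmetric]] .
      moreover have "meet E1 a F1 = a" using meet_absorb[OF f1 ac(1) F1c ac(3)] .
      ultimately show "(a,y) \<in> car P" using memP[OF ac(1) yc(1) l(1)] l(2,3) by simp
    qed
    have Z3: "\<And>z. z \<in> C3 \<Longrightarrow> (z, B) \<in> car P"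
    proof -
      fix z assume z: "z \<in> C3"
      have zc: "z \<in> car E1" "leq E1 a z" "leq E1 z A" using C1c(3) C3(2) z by blast+
      have "meet E1 z F1 = a" using sandwich[OF f1 ac(1) zc(1) A F1c zc(2) zc(3) a_def[symmetric]] .
      then show "(z,B) \<in> car P" using memP[OF zc(1) B l(1)] l(2,3) b_def by simp
    qed
    have fmono: "\<And>y y'. y \<in> D1 \<Longrightarrow> y' \<in> D1 \<Longrightarrow> leq E2 y y' \<Longrightarrow> leq P (f y) (f y')"
    proof -
      fix y y' assume h: "y \<in> D1" "y' \<in> D1" "leq E2 y y'"
      have y: "y \<in> car E2" "leq E2 y b" "y' \<in> car E2" "leq E2 y' b" using h D1c D1b by blast+
      note Yy = Y[OF y(1,2)] and Yy' = Y[OF y(3,4)]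
      have "leq L (inv2 y) (inv2 y')" using m2(8)[of "inv2 y" "inv2 y'"] Yy Yy' h(3) by simp
      then have "leq E1 (\<iota>1 (inv2 y)) (\<iota>1 (inv2 y'))" using m1(7) Yy Yy' by blast
      then show "leq P (f y) (f y')" unfolding f_def using leqP h(3) by simp
    qed
    define I1 where "I1 = f ` D1"
    define I2 where "I2 = (\<lambda>y. (a,y)) ` C2"
    define I3 where "I3 = (\<lambda>z. (z,B)) ` C3"
    have ch1: "is_chain P I1" unfolding is_chain_def I1_def
    proof (intro conjI ballI)
      show "f ` D1 \<subseteq> car P" using Y D1c D1b by blast
      fix p q assume "p \<in> f ` D1" "q \<in> f ` D1"
      then obtain y y' where "y \<in> D1" "y' \<in> D1" "p = f y" "q = f y'" by blast
      then show "leq P p q \<or> leq P q p" using fmono D1ch by blast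
    qed
    have ch2: "is_chain P I2" unfolding is_chain_def I2_def
    proof (intro conjI ballI)
      show "(\<lambda>y. (a,y)) ` C2 \<subseteq> car P" using Z2 by blast
      fix p q assume "p \<in> (\<lambda>y. (a,y)) ` C2" "q \<in> (\<lambda>y. (a,y)) ` C2"
      then obtain y y' where "y \<in> C2" "y' \<in> C2" "p = (a,y)" "q = (a,y')" by blast
      then show "leq P p q \<or> leq P q p" using C2(1) fl_refl[OF f1 ac(1)] leqP unfolding is_chain_def by simp
    qed
    have ch3: "is_chain P I3" unfolding is_chain_def I3_def
    proof (intro conjI ballI)
      show "(\<lambda>z. (z,B)) ` C3 \<subseteq> car P" using Z3 by blast
      fix p q assume "p \<in> (\<lambda>z. (z,B)) ` C3" "q \<in> (\<lambda>z. (z,B)) ` C3"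
      then obtain y y' where "y \<in> C3" "y' \<in> C3" "p = (y,B)" "q = (y',B)" by blast
      then show "leq P p q \<or> leq P q p" using C3(1) fl_refl[OF f2 B] leqP unfolding is_chain_def by simp
    qed
    have x12: "\<forall>p\<in>I1. \<forall>q\<in>I2. leq P p q"
    proof (intro ballI)
      fix p q assume "p \<in> I1" "q \<in> I2"
      then obtain y y' where h: "y \<in> D1" "y' \<in> C2" "p = f y" "q = (a,y')" unfolding I1_def I2_def by blast
      have y: "y \<in> car E2" "leq E2 y b" using h D1c D1b by blast+
      have y': "y' \<in> car E2" "leq E2 b y'" using h C1c(2) C2(2) by blast+
      have "leq E2 y y'" using fl_trans[OF f2 y(1) bc(1) y'(1) y(2) y'(2)] .
      then show "leq P p q" using Y[OF y] h leqP unfolding f_def by simp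
    qed
    have x3: "\<forall>p\<in>I1 \<union> I2. \<forall>q\<in>I3. leq P p q"
    proof (intro ballI)
      fix p q assume p: "p \<in> I1 \<union> I2" and "q \<in> I3"
      then obtain z where z: "z \<in> C3" "q = (z,B)" unfolding I3_def by blast
      have zc: "z \<in> car E1" "leq E1 a z" using z C1c(3) C3(2) by blast+
      from p show "leq P p q"
      proof
        assume "p \<in> I1"
        then obtain y where h: "y \<in> D1" "p = f y" unfolding I1_def by blast
        have y: "y \<in> car E2" "leq E2 y b" using h D1c D1b by blast+
        note Yy = Y[OF y]
        have "leq E1 (\<iota>1 (inv2 y)) z" using fl_trans[OF f1 _ ac(1) zc(1) _ zc(2)] Yy by blast
        moreover have "leq E2 y B" using fl_trans[OF f2 y(1) bc(1) B y(2) bc(2)] .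
        ultimately show ?thesis using h z leqP unfolding f_def by simp
      next
        assume "p \<in> I2"
        then obtain y where h: "y \<in> C2" "p = (a,y)" unfolding I2_def by blast
        then show ?thesis using zc z C2(2) leqP by simp
      qed
    qed
    have chain: "is_chain P (I1 \<union> I2 \<union> I3)"
      by (rule chain_union[OF chain_union[OF ch1 ch2 x12] ch3 x3])
    have below: "\<forall>c\<in>I1 \<union> I2 \<union> I3. leq P c (A,B)"
    proof
      fix c assume "c \<in> I1 \<union> I2 \<union> I3"
      then consider "c \<in> I1" | "c \<in> I2" | "c \<in> I3" by blast
      then show "leq P c (A,B)"
      proof cases
        case 1
        then obtain y where h: "y \<in> D1" "c = f y" unfolding I1_def by blast
        have y: "y \<in> car E2" "leq E2 y b" using h D1c D1b by blast+
        note Yy = Y[OF y]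
        have "leq E1 (\<iota>1 (inv2 y)) A" using fl_trans[OF f1 _ ac(1) A _ ac(2)] Yy by blast
        moreover have "leq E2 y B" using fl_trans[OF f2 y(1) bc(1) B y(2) bc(2)] .
        ultimately show ?thesis using h leqP unfolding f_def by simp
      next
        case 2
        then obtain y where h: "y \<in> C2" "c = (a,y)" unfolding I2_def by blast
        then show ?thesis using ac C2(2) leqP by simp
      next
        case 3
        then obtain z where h: "z \<in> C3" "c = (z,B)" unfolding I3_def by blast
        then show ?thesis using C3(2) fl_refl[OF f2 B] leqP by simp
      qed
    qed
    have card1: "card I1 = card D1" unfolding I1_def
      by (rule card_image) (simp add: inj_on_def f_def)
    have card2: "card I2 = card C2" unfolding I2_def by (rule card_image) (simp add: inj_on_def)
    have card3: "card I3 = card C3" unfolding I3_def by (rule card_image) (simp add: inj_on_def)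
    have finI: "finite I1" "finite I2" "finite I3"
      using finC D1_def unfolding I1_def I2_def I3_def by simp_all
    have disj1: "I1 \<inter> I2 = {}"
    proof (rule ccontr)
      assume "I1 \<inter> I2 \<noteq> {}"
      then obtain y y' where h: "y \<in> D1" "y' \<in> C2" "f y = (a,y')" unfolding I1_def I2_def by blast
      then have "y = y'" unfolding f_def by simp
      moreover have "leq E2 y b" "y \<in> car E2" using h D1c D1b by blast+
      moreover have "leq E2 b y'" "y' \<noteq> b" using h C2(2) by blast+
      ultimately show False using fl_antisym[OF f2 _ bc(1)] by blast
    qed
    have disj2: "(I1 \<union> I2) \<inter> I3 = {}"
    proof (rule ccontr)
      assume "(I1 \<union> I2) \<inter> I3 \<noteq> {}"
      then obtain p z where p: "p \<in> I1 \<union> I2" and z: "z \<in> C3" "p = (z,B)" unfolding I3_def by blast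
      have zc: "z \<in> car E1" "leq E1 a z" "z \<noteq> a" using z C1c(3) C3(2) by blast+
      from p show False
      proof
        assume "p \<in> I1"
        then obtain y where h: "y \<in> D1" "p = f y" unfolding I1_def by blast
        have y: "y \<in> car E2" "leq E2 y b" using h D1c D1b by blast+
        have "z = \<iota>1 (inv2 y)" using h z unfolding f_def by simp
        then have "leq E1 z a" using Y[OF y] by blast
        then show False using fl_antisym[OF f1 zc(1) ac(1) _ zc(2)] zc(3) by blast
      next
        assume "p \<in> I2"
        then show False using z zc(3) unfolding I2_def by blast
      qed
    qed
    have "card (I1 \<union> I2 \<union> I3) = card D1 + card C2 + card C3"
      using card_Un_disjoint[OF finite_UnI[OF finI(1,2)] finI(3) disj2]
        card_Un_disjoint[OF finI(1,2) disj1] card1 card2 card3 by simp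
    also have "\<dots> = \<phi> (A,B) + 1"
      using cardD1 C2(3) C3(3) phix rk_mono[OF f2 bc(1) B bc(2)] rk_mono[OF f1 ac(1) A ac(2)] by simp
    finally have cardCh: "card (I1 \<union> I2 \<union> I3) = \<phi> (A,B) + 1" .
    show "rk P (A,B) = \<phi> (A,B)"
    proof (rule rk_eqI[OF finP _ chain below cardCh])
      fix C assume C: "is_chain P C" "\<forall>c\<in>C. leq P c (A,B)"
      have Cc: "C \<subseteq> car P" using C(1) unfolding is_chain_def by blast
      have inj: "inj_on \<phi> C"
      proof (rule inj_onI)
        fix p q assume pq: "p \<in> C" "q \<in> C" "\<phi> p = \<phi> q"
        show "p = q"
        proof (rule ccontr)
          assume ne: "p \<noteq> q"
          have "leq P p q \<or> leq P q p" using C(1) pq unfolding is_chain_def by blast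
          then show False
          proof
            assume "leq P p q" then have "\<phi> p < \<phi> q" using strict[of p q] pq Cc ne by blast
            then show False using pq(3) by simp
          next
            assume "leq P q p" then have "\<phi> q < \<phi> p" using strict[of q p] pq Cc ne by blast
            then show False using pq(3) by simp
          qed
        qed
      qed
      have "\<phi> ` C \<subseteq> {..\<phi> (A,B)}"
      proof
        fix v assume "v \<in> \<phi> ` C"
        then obtain c where "c \<in> C" "v = \<phi> c" by blast
        then show "v \<in> {..\<phi> (A,B)}" using mono[of c "(A,B)"] C(2) Cc x by auto
      qed
      then have "card (\<phi> ` C) \<le> card {..\<phi> (A,B)}" by (intro card_mono) simp_all
      then show "card C \<le> \<phi> (A,B) + 1" using card_image[OF inj] by simp
    qed
  qed
  have t2c: "t2 \<in> car E2" and t2top: "\<And>x. x \<in> car E2 \<Longrightarrow> leq E2 x t2"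
    using top_props[OF f2] by (simp_all add: t2_def)
  have FF1: "meet E1 F F1 = F1" using meet_comm meet_absorb[OF f1 F1c assms(5)] assms(6) F1_def by metis
  have tF2: "meet E2 t2 F2 = F2" using meet_comm meet_absorb[OF f2 F2c t2c t2top[OF F2c]] by metis
  have topL: "top L \<in> car L" by (rule m1(9))
  have i1t: "\<iota>1 (top L) = F1" and i2t: "\<iota>2 (top L) = F2" using m1(10) m2(10) by (simp_all add: F1_def F2_def)
  have XP: "(F, t2) \<in> car P" using memP[OF assms(5) t2c topL] FF1 tF2 i1t i2t by simp
  have "\<forall>G\<in>car P. rk P (meet P (F,t2) G) + rk P (join P (F,t2) G) = rk P (F,t2) + rk P G"
  proof
    fix G assume GP: "G \<in> car P"
    obtain G1 G2 where G: "G = (G1,G2)" by (cases G)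
    have G1: "G1 \<in> car E1" and G2: "G2 \<in> car E2" using GP carP unfolding G by blast+
    note mFG = meet_props[OF f1 assms(5) G1]
    note jFG = join_props[OF f1 assms(5) G1]
    note mG = meet_props[OF f1 G1 F1c]
    have mm: "meet E1 (meet E1 F G1) F1 = meet E1 G1 F1"
    proof (rule meet_eqI[OF fl_antisym'[OF f1]])
      have a: "leq E1 (meet E1 G1 F1) F" using fl_trans[OF f1 mG(1) F1c assms(5) mG(3) assms(6)[folded F1_def]] .
      show "is_glb E1 {meet E1 F G1, F1} (meet E1 G1 F1)"
        unfolding is_glb_def
      proof (intro conjI ballI impI)
        show "meet E1 G1 F1 \<in> car E1" by (fact mG(1))
        fix x assume "x \<in> {meet E1 F G1, F1}"
        then show "leq E1 (meet E1 G1 F1) x" using mFG(4)[OF mG(1) a mG(2)] mG(3) by blast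
      next
        fix d assume d: "d \<in> car E1" "\<forall>a\<in>{meet E1 F G1, F1}. leq E1 d a"
        then have "leq E1 d G1" using fl_trans[OF f1 d(1) mFG(1) G1 _ mFG(3)] by blast
        then show "leq E1 d (meet E1 G1 F1)" using mG(4)[OF d(1)] d(2) by blast
      qed
    qed
    have mP: "meet P (F,t2) G = (meet E1 F G1, G2)"
    proof (rule meet_eqI[OF antiP])
      have inP: "(meet E1 F G1, G2) \<in> car P" using carP GP mm mFG(1) G2 unfolding G by simp
      show "is_glb P {(F, t2), G} (meet E1 F G1, G2)"
        unfolding is_glb_def
      proof (intro conjI ballI impI)
        show "(meet E1 F G1, G2) \<in> car P" by (fact inP)
        fix x assume "x \<in> {(F, t2), G}"
        then show "leq P (meet E1 F G1, G2) x"
          using leqP mFG(2,3) t2top[OF G2] fl_refl[OF f2 G2] unfolding G by auto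
      next
        fix d assume d: "d \<in> car P" "\<forall>a\<in>{(F, t2), G}. leq P d a"
        obtain d1 d2 where dd: "d = (d1,d2)" by (cases d)
        have "d1 \<in> car E1" using d(1) carP unfolding dd by blast
        then show "leq P d (meet E1 F G1, G2)" using d(2) mFG(4) leqP unfolding dd G by auto
      qed
    qed
    have jm: "meet E1 (join E1 F G1) F1 = F1"
      using meet_comm meet_absorb[OF f1 F1c jFG(1) fl_trans[OF f1 F1c assms(5) jFG(1) assms(6)[folded F1_def] jFG(2)]] by metis
    have jP: "join P (F,t2) G = (join E1 F G1, t2)"
    proof (rule join_eqI[OF antiP])
      have inP: "(join E1 F G1, t2) \<in> car P" using memP[OF jFG(1) t2c topL] jm tF2 i1t i2t by simp
      show "is_lub P {(F, t2), G} (join E1 F G1, t2)"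
        unfolding is_lub_def
      proof (intro conjI ballI impI)
        show "(join E1 F G1, t2) \<in> car P" by (fact inP)
        fix x assume "x \<in> {(F, t2), G}"
        then show "leq P x (join E1 F G1, t2)"
          using leqP jFG(2,3) t2top[OF G2] fl_refl[OF f2 t2c] unfolding G by auto
      next
        fix d assume d: "d \<in> car P" "\<forall>a\<in>{(F, t2), G}. leq P a d"
        obtain d1 d2 where dd: "d = (d1,d2)" by (cases d)
        have "d1 \<in> car E1" "d2 \<in> car E2" using d(1) carP unfolding dd by blast+
        moreover have "leq E2 t2 d2" using d(2) leqP unfolding dd by auto
        moreover have "leq E2 d2 t2" using t2top \<open>d2 \<in> car E2\<close> by blast
        ultimately have "d2 = t2" using fl_antisym[OF f2 _ t2c] by blast
        then show "leq P (join E1 F G1, t2) d" using d(2) jFG(4) leqP fl_refl[OF f2 t2c] \<open>d1 \<in> car E1\<close> unfolding dd G by auto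
      qed
    qed
    have r1: "rk P (meet P (F,t2) G) = rk E1 (meet E1 F G1) - rk E1 (meet E1 G1 F1) + rk E2 G2"
      using rkP[of "meet E1 F G1" G2] mP mm carP GP mFG(1) G2 unfolding G \<phi>_def by simp
    have r2: "rk P (join P (F,t2) G) = rk E1 (join E1 F G1) - rk E1 F1 + rk E2 t2"
      using rkP[of "join E1 F G1" t2] jP jm memP[OF jFG(1) t2c topL] tF2 i1t i2t unfolding \<phi>_def by simp
    have r3: "rk P (F,t2) = rk E1 F - rk E1 F1 + rk E2 t2"
      using rkP[OF XP] FF1 unfolding \<phi>_def by simp
    have r4: "rk P G = rk E1 G1 - rk E1 (meet E1 G1 F1) + rk E2 G2"
      using rkP GP unfolding G \<phi>_def by simp
    have modF: "rk E1 (meet E1 F G1) + rk E1 (join E1 F G1) = rk E1 F + rk E1 G1"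
      using assms(7) G1 unfolding modular_flat_def by blast
    have i1: "rk E1 (meet E1 G1 F1) \<le> rk E1 (meet E1 F G1)"
      using rk_mono[OF f1 mG(1) mFG(1)] mm meet_props[OF f1 mFG(1) F1c] by metis
    have i2: "rk E1 F1 \<le> rk E1 (join E1 F G1)"
      using rk_mono[OF f1 F1c jFG(1)] fl_trans[OF f1 F1c assms(5) jFG(1) assms(6)[folded F1_def] jFG(2)] by blast
    have i3: "rk E1 F1 \<le> rk E1 F" using rk_mono[OF f1 F1c assms(5) assms(6)[folded F1_def]] .
    have i4: "rk E1 (meet E1 G1 F1) \<le> rk E1 G1" using rk_mono[OF f1 mG(1) G1 mG(2)] .
    show "rk P (meet P (F,t2) G) + rk P (join P (F,t2) G) = rk P (F,t2) + rk P G"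
      unfolding r1 r2 r3 r4 using modF i1 i2 i3 i4 by linarith
  qed
  then show ?thesis using XP unfolding modular_flat_def P_def t2_def by blast
qed

end
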